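(* Let $G$ be the digraph with $V(G)=\{u,v,w\}$ and $E(G)=\{(u,v),(u,w),(w,w)\}$. Then the associative spectrum of $\mathbb{A}(G)$ satisfies $s_n=|R_{n-1}|$ for all $n\ge3$. Hence $s_n=\Theta(\alpha^n)$, where $\alpha\approx1.755$ is the unique positive root of $x^4-x^3-x^2-1$.
   Context: The graph algebra $\mathbb{A}(G)$ is the groupoid on $V\cup\{\infty\}$ with $xy=x$ if $x,y\in V$ and $(x,y)\in E$, and $xy=\infty$ otherwise. $B_n$ is the set of binary terms in which $x_1,\dots,x_n$ each occur once in this order; the associative spectrum $s_n$ is the number of distinct term operations on $\mathbb{A}(G)$ induced by bracketings in $B_n$. For $n\ge2$, $R_n$ is the set of words of length $n$ over $\{0,1\}$ that do not start with $01$, do not end with $10$, and do not contain $101$. $\Theta(\alpha^n)$ means bounded between $c_1\alpha^n$ and $c_2\alpha^n$ for positive constants $c_1,c_2$. *)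

theory Defs
  imports Main "HOL-Library.FuncSet" "HOL-Library.Sublist" "HOL-Library.Landau_Symbols"
begin

(* Graph algebra A(G) of a digraph with vertex set V and edge set E:
   carrier is Some ` V \<union> {None}, where None plays the role of \<infinity>. *)
fun graph_op :: "('a \<times> 'a) set \<Rightarrow> 'a option \<Rightarrow> 'a option \<Rightarrow> 'a option" where
  "graph_op E (Some x) (Some y) = (if (x, y) \<in> E then Some x else None)"
| "graph_op E _ _ = None"

definition graph_carrier :: "'a set \<Rightarrow> 'a option set" where
  "graph_carrier V = Some ` V \<union> {None}"

(* Bracketings: binary trees whose leaves are the variables x_1..x_n in order *)
datatype btree = Leaf | Node btree btree

fun leaves :: "btree \<Rightarrow> nat" where
  "leaves Leaf = 1"
| "leaves (Node l r) = leaves l + leaves r"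

definition B :: "nat \<Rightarrow> btree set" where
  "B n = {t. leaves t = n}"

fun eval_term :: "('b \<Rightarrow> 'b \<Rightarrow> 'b) \<Rightarrow> btree \<Rightarrow> 'b list \<Rightarrow> 'b" where
  "eval_term f Leaf xs = hd xs"
| "eval_term f (Node l r) xs =
     f (eval_term f l (take (leaves l) xs)) (eval_term f r (drop (leaves l) xs))"

definition term_op :: "'b set \<Rightarrow> ('b \<Rightarrow> 'b \<Rightarrow> 'b) \<Rightarrow> nat \<Rightarrow> btree \<Rightarrow> ('b list \<Rightarrow> 'b)" where
  "term_op A f n t = restrict (eval_term f t) {xs. length xs = n \<and> set xs \<subseteq> A}"

definition assoc_spectrum :: "'b set \<Rightarrow> ('b \<Rightarrow> 'b \<Rightarrow> 'b) \<Rightarrow> nat \<Rightarrow> nat" where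
  "assoc_spectrum A f n = card (term_op A f n ` B n)"

datatype vert = U | Vv | W

definition G_edges :: "(vert \<times> vert) set" where
  "G_edges = {(U, Vv), (U, W), (W, W)}"

definition R :: "nat \<Rightarrow> nat list set" where
  "R n = {w. length w = n \<and> set w \<subseteq> {0, 1} \<and> \<not> prefix [0, 1] w \<and> \<not> suffix [1, 0] w
              \<and> \<not> sublist [1, 0, 1] w}"

end

theory Submission
  imports Defs "HOL-Library.Sublist" "HOL-Library.Landau_Symbols"
begin


definition good :: "nat list \<Rightarrow> bool" where
  "good w \<longleftrightarrow> set w \<subseteq> {0,1} \<and> \<not> prefix [0,1] w \<and> \<not> suffix [1,0] w \<and> \<not> sublist [1,0,1] w \<and> w \<noteq> [0]"

lemma suf1: "suffix [x] v \<longleftrightarrow> v \<noteq> [] \<and> last v = x"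
  by (cases v rule: rev_cases) auto

lemma suf2: "suffix [a, b] (v @ [x]) \<longleftrightarrow> b = x \<and> v \<noteq> [] \<and> last v = a"
proof -
  have "suffix [a, b] (v @ [x]) \<longleftrightarrow> suffix ([a] @ [b]) (v @ [x])" by simp
  also have "\<dots> \<longleftrightarrow> b = x \<and> suffix [a] v" by (rule snoc_suffix_snoc)
  finally show ?thesis by (auto simp: suf1)
qed

lemma suf3: "suffix [a, b, c] (v @ [x]) \<longleftrightarrow> c = x \<and> suffix [a,b] v"
proof -
  have "suffix [a, b, c] (v @ [x]) \<longleftrightarrow> suffix ([a,b] @ [c]) (v @ [x])" by simp
  also have "\<dots> \<longleftrightarrow> c = x \<and> suffix [a,b] v" by (rule snoc_suffix_snoc)
  finally show ?thesis .
qed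

lemma sub_snoc: "sublist [a,b,c] (v @ [x]) \<longleftrightarrow> (c = x \<and> suffix [a,b] v) \<or> sublist [a,b,c] v"
  by (simp add: sublist_snoc suf3)

lemma pre_snoc: "prefix [a,b] (v @ [x]) \<longleftrightarrow> prefix [a,b] v \<or> v @ [x] = [a,b]"
  by auto

lemma suffix2_last: "suffix [a,b] v \<Longrightarrow> v \<noteq> [] \<and> last v = b"
  by (auto simp: suffix_def)

lemma S1: "good (v @ [1]) \<longleftrightarrow> good v"
proof -
  have "suffix [1,0] v \<Longrightarrow> sublist [1,0,1] (v @ [1])" by (simp add: sub_snoc)
  moreover have "sublist [1,0,1] v \<Longrightarrow> sublist [1,0,1] (v @ [1])" by (simp add: sub_snoc)
  moreover have "prefix [0,1] v \<Longrightarrow> prefix [0,1] (v @ [1])" by simp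
  moreover have "v = [0] \<Longrightarrow> prefix [0,1] (v @ [1])" by simp
  moreover have "\<not> suffix [1,0] (v @ [1])" by (simp add: suf2)
  ultimately show ?thesis unfolding good_def
    by (auto simp: sub_snoc pre_snoc)
qed

lemma S2: "good v \<Longrightarrow> v \<noteq> [] \<Longrightarrow> last v = 0 \<Longrightarrow> good (v @ [0])"
  unfolding good_def
  by (auto simp: sub_snoc pre_snoc suf2 suf1 dest: suffix2_last)

lemma S3: "good v \<Longrightarrow> v = [] \<or> last v = 1 \<Longrightarrow> good (v @ [0,0])"
proof -
  assume g: "good v" and l: "v = [] \<or> last v = 1"
  have e: "v @ [0,0] = (v @ [0]) @ [0]" by simp
  have 1: "\<not> sublist [1,0,1] (v @ [0])" using g unfolding good_def by (simp only: sub_snoc) simp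
  have 2: "\<not> sublist [1,0,1] ((v @ [0]) @ [0])" using 1 by (simp only: sub_snoc) simp
  have 3: "\<not> suffix [1,0] ((v @ [0]) @ [0])" by (simp only: suf2) simp
  have 4: "\<not> prefix [0,1] (v @ [0])" using g l unfolding good_def by (simp only: pre_snoc) auto
  have 5: "\<not> prefix [0,1] ((v @ [0]) @ [0])" using 4 by (simp only: pre_snoc) auto
  show ?thesis unfolding e using 2 3 5 g by (auto simp: good_def)
qed


lemma last01: "set w \<subseteq> {0,1} \<Longrightarrow> w \<noteq> [] \<Longrightarrow> last w = 0 \<or> last w = (1::nat)"
  using last_in_set[of w] by blast

lemma good_app: "good (v @ z) \<Longrightarrow> set v \<subseteq> {0,1} \<and> \<not> prefix [0,1] v \<and> \<not> sublist [1,0,1] v"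
proof -
  assume g: "good (v @ z)"
  have "prefix [0,1] v \<Longrightarrow> prefix [0,1] (v @ z)" by (rule prefix_prefix)
  moreover have "sublist [1,0,1] v \<Longrightarrow> sublist [1,0,1] (v @ z)"
    by (meson sublist_append_rightI sublist_order.order.trans)
  ultimately show ?thesis using g unfolding good_def by auto
qed

lemma S4: "good (v @ [0]) \<Longrightarrow> (\<exists>u. v = u @ [0] \<and> good u \<and> (u = [] \<or> last u = 1)) \<or> (v \<noteq> [] \<and> last v = 0 \<and> good v)"
proof -
  assume g: "good (v @ [0])"
  have vne: "v \<noteq> []" using g by (auto simp: good_def)
  have "last v \<noteq> 1" using g vne by (auto simp: good_def suf2 suf1)
  then have lv: "last v = 0" using last01[of v] vne good_app[OF g] by auto
  obtain u where u: "v = u @ [0]" using vne lv by (cases v rule: rev_cases) auto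
  have gu: "set u \<subseteq> {0,1} \<and> \<not> prefix [0,1] u \<and> \<not> sublist [1,0,1] u"
    using good_app[of u "[0,0]"] g u by simp
  show ?thesis
  proof (cases "u = [] \<or> last u = 1")
    case True
    have "\<not> suffix [1,0] u" using True by (auto dest: suffix2_last)
    moreover have "u \<noteq> [0]" using True by auto
    ultimately have "good u" using gu by (simp add: good_def)
    then show ?thesis using u True by blast
  next
    case False
    have "\<not> suffix [1,0] v" using False u by (simp only: suf2) simp
    moreover have "v \<noteq> [0]" using False u by auto
    ultimately have "good v" using good_app[of v "[0]"] g by (simp add: good_def)
    then show ?thesis using vne lv by blast
  qed
qed

inductive gen :: "nat list \<Rightarrow> bool" where
  gen_nil: "gen []"
| gen_one: "gen w \<Longrightarrow> gen (w @ [1])"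
| gen_zeros: "gen w \<Longrightarrow> 2 \<le> k \<Longrightarrow> gen (w @ replicate k 0)"

lemma G0: "gen v \<Longrightarrow> v \<noteq> [] \<Longrightarrow> last v = 0 \<Longrightarrow> gen (v @ [0])"
proof (induction rule: gen.cases)
  case (gen_zeros w k)
  have "w @ replicate k 0 @ [0] = w @ replicate (Suc k) 0" by (simp add: replicate_append_same)
  then show ?case using gen.gen_zeros[OF gen_zeros(2), of "Suc k"] gen_zeros by simp
qed auto

lemma Zrep: "good v \<Longrightarrow> v \<noteq> [] \<Longrightarrow> last v = 0 \<Longrightarrow> good (v @ replicate j 0)"
proof (induction j)
  case (Suc j)
  have "v @ replicate (Suc j) 0 = (v @ replicate j 0) @ [0]" by (simp add: replicate_append_same)
  moreover have "last (v @ replicate j 0) = 0" using Suc by (cases j) auto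
  ultimately show ?case using S2[OF Suc.IH] Suc by simp
qed simp

lemma gen_good: "gen w \<Longrightarrow> good w"
proof (induction rule: gen.induct)
  case gen_nil then show ?case by (simp add: good_def)
next
  case (gen_one w) then show ?case using S1[THEN iffD2] by blast
next
  case (gen_zeros w k)
  then obtain j where k: "k = Suc (Suc j)" using le_Suc_ex[of 2 k] by auto
  show ?case
  proof (cases "w = [] \<or> last w = 1")
    case True
    have "good (w @ [0,0])" by (rule S3[OF gen_zeros(3) True])
    from Zrep[OF this, of j] show ?thesis using k by simp
  next
    case False
    moreover have "last w = 0 \<or> last w = 1" using False gen_zeros(3) last01[of w] by (auto simp: good_def)
    ultimately show ?thesis using Zrep[OF gen_zeros(3)] by auto
  qed
qed

lemma good_gen: "good w \<Longrightarrow> gen w"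
proof (induction "length w" arbitrary: w rule: less_induct)
  case less
  show ?case
  proof (cases w rule: rev_cases)
    case Nil then show ?thesis by (simp add: gen.intros)
  next
    case (snoc v x)
    have "x \<in> {0,1}" using less.prems snoc by (auto simp: good_def)
    then consider "x = 0" | "x = 1" by auto
    then show ?thesis
    proof cases
      case 2
      then have "good v" using less.prems snoc S1 by simp
      then have "gen v" using less.hyps snoc by simp
      then show ?thesis using snoc 2 gen_one by simp
    next
      case 1
      from S4[of v] less.prems snoc 1 consider (a) u where "v = u@[0]" "good u" | (b) "v \<noteq> []" "last v = 0" "good v" by auto
      then show ?thesis
      proof cases
        case a
        then have "gen u" using less.hyps snoc by simp
        from gen_zeros[OF this, of 2] show ?thesis using a snoc 1 by (simp add: numeral_2_eq_2)
      next
        case b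
        then have "gen v" using less.hyps snoc by simp
        from G0[OF this b(1,2)] show ?thesis using snoc 1 by simp
      qed
    qed
  qed
qed

definition "Rg m = {w. length w = m \<and> good w}"
definition "Og m = {w \<in> Rg m. w = [] \<or> last w = 1}"
definition "Zg m = {w \<in> Rg m. w \<noteq> [] \<and> last w = 0}"
definition "Nc m = card (Rg m)"

lemma fin_Rg: "finite (Rg m)"
proof (rule finite_subset)
  show "Rg m \<subseteq> {w. set w \<subseteq> {0,1} \<and> length w = m}" by (auto simp: Rg_def good_def)
  show "finite {w. set w \<subseteq> {0::nat,1} \<and> length w = m}" by (rule finite_lists_length_eq) simp
qed

lemma fin_Og: "finite (Og m)" and fin_Zg: "finite (Zg m)"
  using fin_Rg by (auto simp: Og_def Zg_def)

lemma Rg_split: "Rg m = Og m \<union> Zg m" "Og m \<inter> Zg m = {}"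
proof -
  have "w \<in> Rg m \<Longrightarrow> w \<noteq> [] \<Longrightarrow> last w \<in> {0,1}" for w
    using last01[of w] by (auto simp: Rg_def good_def)
  then show "Rg m = Og m \<union> Zg m" by (auto simp: Og_def Zg_def)
  show "Og m \<inter> Zg m = {}" by (auto simp: Og_def Zg_def)
qed

lemma cN: "Nc m = card (Og m) + card (Zg m)"
  unfolding Nc_def using Rg_split[of m] fin_Og fin_Zg by (simp add: card_Un_disjoint)

lemma I1: "Og (Suc m) = (\<lambda>v. v @ [1]) ` Rg m"
proof
  show "Og (Suc m) \<subseteq> (\<lambda>v. v @ [1]) ` Rg m"
  proof
    fix w assume w: "w \<in> Og (Suc m)"
    then have "w \<noteq> []" "last w = 1" by (auto simp: Og_def Rg_def)
    then obtain v where v: "w = v @ [1]" by (cases w rule: rev_cases) auto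
    then have "v \<in> Rg m" using w S1 by (auto simp: Og_def Rg_def)
    then show "w \<in> (\<lambda>v. v @ [1]) ` Rg m" using v by blast
  qed
  show "(\<lambda>v. v @ [1]) ` Rg m \<subseteq> Og (Suc m)" using S1 by (auto simp: Og_def Rg_def)
qed

lemma I2: "Zg (Suc (Suc m)) = (\<lambda>v. v @ [0]) ` Zg (Suc m) \<union> (\<lambda>v. v @ [0,0]) ` Og m"
proof
  show "Zg (Suc (Suc m)) \<subseteq> (\<lambda>v. v @ [0]) ` Zg (Suc m) \<union> (\<lambda>v. v @ [0,0]) ` Og m"
  proof
    fix w assume w: "w \<in> Zg (Suc (Suc m))"
    then have "w \<noteq> []" "last w = 0" by (auto simp: Zg_def Rg_def)
    then obtain v where v: "w = v @ [0]" by (cases w rule: rev_cases) auto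
    have lv: "length v = Suc m" using w v by (auto simp: Zg_def Rg_def)
    from S4[of v] w v consider (a) u where "v = u@[0]" "good u" "u = [] \<or> last u = 1"
      | (b) "v \<noteq> []" "last v = 0" "good v" by (auto simp: Zg_def Rg_def)
    then show "w \<in> (\<lambda>v. v @ [0]) ` Zg (Suc m) \<union> (\<lambda>v. v @ [0,0]) ` Og m"
    proof cases
      case a
      then have "u \<in> Og m" using lv by (auto simp: Og_def Rg_def)
      moreover have "w = u @ [0,0]" using a v by simp
      ultimately show ?thesis by blast
    next
      case b
      then have "v \<in> Zg (Suc m)" using lv by (auto simp: Zg_def Rg_def)
      then show ?thesis using v by blast
    qed
  qed
  show "(\<lambda>v. v @ [0]) ` Zg (Suc m) \<union> (\<lambda>v. v @ [0,0]) ` Og m \<subseteq> Zg (Suc (Suc m))"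
    using S2 S3 by (auto simp: Og_def Zg_def Rg_def)
qed

lemma I2disj: "(\<lambda>v. v @ [0]) ` Zg (Suc m) \<inter> (\<lambda>v. v @ [0,0]) ` Og m = {}"
proof -
  have False if "v \<in> Zg (Suc m)" "u \<in> Og m" "v @ [0] = u @ [0,0]" for u v
  proof -
    have v: "v = u @ [0]" using that(3) by simp
    have "good v" using that(1) by (auto simp: Zg_def Rg_def)
    moreover have "u = [] \<or> last u = 1" using that(2) by (auto simp: Og_def)
    ultimately show False using v by (auto simp: good_def suf2 suf1)
  qed
  then show ?thesis by blast
qed

lemma cO: "card (Og (Suc m)) = Nc m"
  unfolding I1 Nc_def by (rule card_image) (simp add: inj_on_def)

lemma cZ: "card (Zg (Suc (Suc m))) = card (Zg (Suc m)) + card (Og m)"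
proof -
  have "card (Zg (Suc (Suc m))) = card ((\<lambda>v. v @ [0]) ` Zg (Suc m)) + card ((\<lambda>v. v @ [0,0]) ` Og m)"
    unfolding I2 by (rule card_Un_disjoint) (use fin_Zg fin_Og I2disj in auto)
  also have "\<dots> = card (Zg (Suc m)) + card (Og m)"
    by (simp add: card_image inj_on_def)
  finally show ?thesis .
qed

lemma Og0: "Og 0 = {[]}" by (auto simp: Og_def Rg_def good_def)
lemma Zg0: "Zg 0 = {}" by (auto simp: Zg_def Rg_def)
lemma Zg1: "Zg 1 = {}"
proof -
  have "w = [0]" if "length w = 1" "last w = 0" for w :: "nat list"
    using that by (cases w) auto
  then show ?thesis by (auto simp: Zg_def Rg_def good_def)
qed

lemma Nc_rec: "Nc (m + 4) = Nc (m + 3) + Nc (m + 2) + Nc m"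
proof -
  have "Nc (m+4) = card (Og (m+4)) + card (Zg (m+4))" by (rule cN)
  moreover have "card (Og (m+4)) = Nc (m+3)" using cO[of "m+3"] by (simp add: eval_nat_numeral)
  moreover have "card (Zg (m+4)) = card (Zg (m+3)) + card (Og (m+2))" using cZ[of "m+2"] by (simp add: eval_nat_numeral)
  moreover have "card (Zg (m+3)) = card (Zg (m+2)) + card (Og (m+1))" using cZ[of "m+1"] by (simp add: eval_nat_numeral)
  moreover have "card (Og (m+1)) = Nc m" using cO[of m] by simp
  moreover have "Nc (m+2) = card (Og (m+2)) + card (Zg (m+2))" by (rule cN)
  ultimately show ?thesis by linarith
qed

lemma Nc_small: "Nc 0 = 1" "Nc 1 = 1" "Nc 2 = 2" "Nc 3 = 4"
proof -
  have o0: "card (Og 0) = 1" by (simp add: Og0)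
  have z0: "card (Zg 0) = 0" by (simp add: Zg0)
  have z1: "card (Zg 1) = 0" unfolding Zg1 by simp
  show n0: "Nc 0 = 1" using cN[of 0] o0 z0 by simp
  have o1: "card (Og 1) = 1" using cO[of 0] n0 by simp
  show n1: "Nc 1 = 1" using cN[of 1] o1 z1 by simp
  have o2: "card (Og 2) = 1" using cO[of 1] n1 by (simp add: numeral_2_eq_2)
  have z2: "card (Zg 2) = 1" using cZ[of 0] z1 o0 by (simp add: numeral_2_eq_2)
  show n2: "Nc 2 = 2" using cN[of 2] o2 z2 by simp
  have o3: "card (Og 3) = 2" using cO[of 2] n2 by (simp add: numeral_3_eq_3)
  have z3: "card (Zg 3) = 2" using cZ[of 1] z2 o1 by (simp add: numeral_3_eq_3 numeral_2_eq_2)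
  show "Nc 3 = 4" using cN[of 3] o3 z3 by simp
qed

lemma Rg_R: "2 \<le> m \<Longrightarrow> Rg m = R m"
  by (auto simp: Rg_def R_def good_def)



abbreviation "gop \<equiv> graph_op G_edges"

lemma gop_None: "graph_op E None y = None" by simp
lemma gop_cases: "graph_op E a b = None \<or> graph_op E a b = a"
  by (cases a; cases b) auto
lemma gopW: "gop (Some W) y = (if y = Some W then Some W else None)"
  by (cases y) (auto simp: G_edges_def elim: vert.exhaust)
lemma gopV: "gop (Some Vv) y = None"
  by (cases y) (auto simp: G_edges_def)
lemma gopU: "gop (Some U) y = (if y = Some Vv \<or> y = Some W then Some U else None)"
  apply (cases y)
   apply simp
  subgoal for a by (cases a) (auto simp: G_edges_def)
  done

lemma leaves_pos: "0 < leaves t" by (induction t) auto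

lemma hd_take': "0 < k \<Longrightarrow> hd (take k xs) = hd xs"
  by (cases xs; cases k) auto

lemma eval_cases: "eval_term gop t xs = None \<or> eval_term gop t xs = hd xs"
proof (induction t arbitrary: xs)
  case Leaf then show ?case by simp
next
  case (Node l r)
  have "hd (take (leaves l) xs) = hd xs" using leaves_pos hd_take' by blast
  then show ?case using Node.IH(1)[of "take (leaves l) xs"]
      gop_cases[of G_edges "eval_term gop l (take (leaves l) xs)" "eval_term gop r (drop (leaves l) xs)"]
    by auto
qed

lemma eval_None: "hd xs = None \<Longrightarrow> eval_term gop t xs = None"
  using eval_cases[of t xs] by auto

lemma eval_V: "hd xs = Some Vv \<Longrightarrow> t \<noteq> Leaf \<Longrightarrow> eval_term gop t xs = None"
proof (cases t)
  case (Node l r)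
  assume h: "hd xs = Some Vv"
  have "hd (take (leaves l) xs) = hd xs" using leaves_pos hd_take' by blast
  then have "eval_term gop l (take (leaves l) xs) = None \<or> eval_term gop l (take (leaves l) xs) = Some Vv"
    using eval_cases[of l "take (leaves l) xs"] h by auto
  then show ?thesis using Node by (auto simp: gopV)
qed simp

definition Q :: "nat \<Rightarrow> vert option \<Rightarrow> bool" where
  "Q b y \<longleftrightarrow> y = Some W \<or> (b = 1 \<and> y = Some Vv)"

lemma len_split:
  assumes "length xs = leaves l + leaves r"
  shows "length (take (leaves l) xs) = leaves l" "length (drop (leaves l) xs) = leaves r"
    "take (leaves l) xs \<noteq> []" "drop (leaves l) xs \<noteq> []"
  using assms leaves_pos[of l] leaves_pos[of r] by auto

lemma eval_W: "length xs = leaves t \<Longrightarrow> hd xs = Some W \<Longrightarrow>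
   eval_term gop t xs = (if \<forall>y\<in>set xs. y = Some W then Some W else None)"
proof (induction t arbitrary: xs)
  case Leaf then show ?case by (cases xs) auto
next
  case (Node l r)
  define xs1 where "xs1 = take (leaves l) xs"
  define xs2 where "xs2 = drop (leaves l) xs"
  have L: "length xs1 = leaves l" "length xs2 = leaves r" "xs1 \<noteq> []" "xs2 \<noteq> []"
    using len_split[of xs l r] Node.prems by (auto simp: xs1_def xs2_def)
  have h1: "hd xs1 = Some W" using Node.prems leaves_pos hd_take' xs1_def by metis
  have e1: "eval_term gop l xs1 = (if \<forall>y\<in>set xs1. y = Some W then Some W else None)"
    using Node.IH(1)[OF L(1) h1] .
  have e2: "gop (Some W) (eval_term gop r xs2) = (if \<forall>y\<in>set xs2. y = Some W then Some W else None)"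
  proof (cases "hd xs2 = Some W")
    case True
    then show ?thesis using Node.IH(2)[OF L(2) True] by (simp add: gopW)
  next
    case False
    have "hd xs2 \<in> set xs2" using L(4) by simp
    then have "\<not> (\<forall>y\<in>set xs2. y = Some W)" using False by auto
    moreover have "eval_term gop r xs2 \<noteq> Some W" using eval_cases[of r xs2] False by auto
    ultimately show ?thesis by (simp add: gopW)
  qed
  have sx: "set xs = set xs1 \<union> set xs2"
    unfolding xs1_def xs2_def by (metis append_take_drop_id set_append)
  show ?case using e1 e2 sx by (auto simp: xs1_def[symmetric] xs2_def[symmetric])
qed

lemma rep_Q: "length ys = m \<Longrightarrow> list_all2 Q (replicate m 0) ys \<longleftrightarrow> (\<forall>y\<in>set ys. y = Some W)"
  by (induction ys arbitrary: m) (auto simp: Q_def)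

fun lw :: "btree \<Rightarrow> nat list" where
  "lw Leaf = []"
| "lw (Node l r) = lw l @ (if r = Leaf then [1] else replicate (leaves r) 0)"

lemma lw_len: "length (lw t) = leaves t - 1"
  using leaves_pos by (induction t) (auto simp: Suc_leI)

lemma eval_U: "length xs = leaves t \<Longrightarrow> hd xs = Some U \<Longrightarrow>
   eval_term gop t xs = (if list_all2 Q (lw t) (tl xs) then Some U else None)"
proof (induction t arbitrary: xs)
  case Leaf then show ?case by (cases xs) auto
next
  case (Node l r)
  define xs1 where "xs1 = take (leaves l) xs"
  define xs2 where "xs2 = drop (leaves l) xs"
  define blk where "blk = (if r = Leaf then [1] else replicate (leaves r) (0::nat))"
  have L: "length xs1 = leaves l" "length xs2 = leaves r" "xs1 \<noteq> []" "xs2 \<noteq> []"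
    using len_split[of xs l r] Node.prems by (auto simp: xs1_def xs2_def)
  have h1: "hd xs1 = Some U" using Node.prems leaves_pos hd_take' xs1_def by metis
  have e1: "eval_term gop l xs1 = (if list_all2 Q (lw l) (tl xs1) then Some U else None)"
    using Node.IH(1)[OF L(1) h1] .
  have c: "(eval_term gop r xs2 = Some Vv \<or> eval_term gop r xs2 = Some W) \<longleftrightarrow> list_all2 Q blk xs2"
  proof (cases "r = Leaf")
    case True
    then obtain y where "xs2 = [y]" using L(2) by (cases xs2) auto
    then show ?thesis using True by (auto simp: blk_def Q_def)
  next
    case False
    have b: "list_all2 Q blk xs2 \<longleftrightarrow> (\<forall>y\<in>set xs2. y = Some W)"
      using rep_Q[OF L(2)] False by (simp add: blk_def)
    show ?thesis
    proof (cases "hd xs2 = Some W")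
      case True
      then show ?thesis using eval_W[OF L(2) True] b by auto
    next
      case False': False
      have "hd xs2 \<in> set xs2" using L(4) by simp
      then have "\<not> (\<forall>y\<in>set xs2. y = Some W)" using False' by auto
      moreover have "eval_term gop r xs2 \<noteq> Some Vv"
        using eval_V[of xs2 r] eval_cases[of r xs2] False by auto
      moreover have "eval_term gop r xs2 \<noteq> Some W" using eval_cases[of r xs2] False' by auto
      ultimately show ?thesis using b by auto
    qed
  qed
  have tl: "tl xs = tl xs1 @ xs2"
    using L(3) unfolding xs1_def xs2_def
    by (metis append_take_drop_id tl_append_if)
  have ll: "length (lw l) = length (tl xs1)" using lw_len L(1) by simp
  have "list_all2 Q (lw (Node l r)) (tl xs) \<longleftrightarrow> list_all2 Q (lw l) (tl xs1) \<and> list_all2 Q blk xs2"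
    unfolding tl using ll by (simp add: list_all2_append blk_def)
  then show ?case using e1 c
    by (auto simp: xs1_def[symmetric] xs2_def[symmetric] gopU)
qed

definition Phi :: "nat list \<Rightarrow> vert option list \<Rightarrow> vert option" where
  "Phi w xs = (if hd xs = Some U \<and> list_all2 Q w (tl xs) then Some U
               else if (\<forall>y\<in>set xs. y = Some W) then Some W else None)"

lemma eval_Phi: "t \<noteq> Leaf \<Longrightarrow> length xs = leaves t \<Longrightarrow> eval_term gop t xs = Phi (lw t) xs"
proof -
  assume t: "t \<noteq> Leaf" and l: "length xs = leaves t"
  then have ne: "xs \<noteq> []" using leaves_pos[of t] by auto
  then have hs: "hd xs \<in> set xs" by simp
  show ?thesis
  proof (cases "hd xs")
    case None then show ?thesis using eval_None hs by (auto simp: Phi_def)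
  next
    case (Some a)
    then show ?thesis
    proof (cases a)
      case U then show ?thesis using eval_U[OF l] Some hs by (auto simp: Phi_def)
    next
      case Vv then show ?thesis using eval_V[OF _ t] Some hs by (auto simp: Phi_def)
    next
      case W then show ?thesis using eval_W[OF l] Some by (auto simp: Phi_def)
    qed
  qed
qed



lemma lw_gen: "gen (lw t)"
proof (induction t)
  case Leaf then show ?case by (simp add: gen_nil)
next
  case (Node l r)
  show ?case
  proof (cases "r = Leaf")
    case True then show ?thesis using gen_one[OF Node.IH(1)] by simp
  next
    case False
    then obtain a b where "r = Node a b" by (cases r) auto
    then have "2 \<le> leaves r" using leaves_pos[of a] leaves_pos[of b] by simp
    then show ?thesis using gen_zeros[OF Node.IH(1)] False by simp
  qed
qed

fun comb :: "nat \<Rightarrow> btree" where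
  "comb 0 = Leaf"
| "comb (Suc 0) = Leaf"
| "comb (Suc (Suc k)) = Node (comb (Suc k)) Leaf"

lemma comb_leaves: "1 \<le> k \<Longrightarrow> leaves (comb k) = k"
  by (induction k rule: comb.induct) auto

lemma gen_lw: "gen w \<Longrightarrow> \<exists>t. lw t = w \<and> leaves t = Suc (length w)"
proof (induction rule: gen.induct)
  case gen_nil
  then show ?case by (intro exI[of _ Leaf]) simp
next
  case (gen_one w)
  then obtain t where "lw t = w \<and> leaves t = Suc (length w)" by blast
  then show ?case by (intro exI[of _ "Node t Leaf"]) simp
next
  case (gen_zeros w k)
  then obtain t where t: "lw t = w \<and> leaves t = Suc (length w)" by blast
  obtain j where k: "k = Suc (Suc j)" using gen_zeros(2) le_Suc_ex[of 2 k] by auto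
  have "comb k \<noteq> Leaf" using k by simp
  moreover have "leaves (comb k) = k" using comb_leaves k by simp
  ultimately show ?case using t by (intro exI[of _ "Node t (comb k)"]) simp
qed

lemma carrier_UNIV: "graph_carrier (UNIV :: vert set) = UNIV"
  unfolding graph_carrier_def by (auto intro: option.exhaust)

definition "An n = {xs :: vert option list. length xs = n \<and> set xs \<subseteq> UNIV}"

lemma term_op_Phi: "2 \<le> n \<Longrightarrow> t \<in> B n \<Longrightarrow>
  term_op (graph_carrier UNIV) gop n t = restrict (Phi (lw t)) (An n)"
proof -
  assume n: "2 \<le> n" and t: "t \<in> B n"
  then have "t \<noteq> Leaf" by (auto simp: B_def)
  then show ?thesis using t unfolding term_op_def carrier_UNIV An_def
    by (intro restrict_ext) (auto simp: B_def eval_Phi)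
qed

lemma lw_image: "1 \<le> n \<Longrightarrow> lw ` B n = Rg (n - 1)"
proof
  assume n: "1 \<le> n"
  show "lw ` B n \<subseteq> Rg (n - 1)"
    using lw_gen gen_good lw_len by (auto simp: B_def Rg_def)
  show "Rg (n - 1) \<subseteq> lw ` B n"
  proof
    fix w assume "w \<in> Rg (n - 1)"
    then have "gen w" "length w = n - 1" using good_gen by (auto simp: Rg_def)
    then obtain t where "lw t = w" "leaves t = n" using gen_lw n by fastforce
    then show "w \<in> lw ` B n" by (auto simp: B_def)
  qed
qed

lemma sep:
  assumes "length w1 = m" "length w2 = m" "i < m" "w1 ! i = 1" "w2 ! i \<noteq> 1"
  shows "restrict (Phi w1) (An (Suc m)) \<noteq> restrict (Phi w2) (An (Suc m))"
proof -
  define ys where "ys = (replicate m (Some W))[i := Some Vv]"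
  define xs where "xs = Some U # ys"
  have ly: "length ys = m" by (simp add: ys_def)
  have xA: "xs \<in> An (Suc m)" by (simp add: An_def xs_def ly)
  have ysn: "ys ! j = (if j = i then Some Vv else Some W)" if "j < m" for j
    using that assms(3) by (simp add: ys_def nth_list_update)
  have "list_all2 Q w1 ys"
    using assms(1,4) ly ysn by (auto simp: list_all2_conv_all_nth Q_def)
  then have p1: "Phi w1 xs = Some U" by (simp add: Phi_def xs_def)
  have "\<not> list_all2 Q w2 ys"
    using assms(2,3,5) ly ysn by (auto simp: list_all2_conv_all_nth Q_def)
  then have p2: "Phi w2 xs = None" by (simp add: Phi_def xs_def)
  have "restrict (Phi w1) (An (Suc m)) xs \<noteq> restrict (Phi w2) (An (Suc m)) xs"
    using xA p1 p2 by simp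
  then show ?thesis by metis
qed

lemma inj_Phi: "inj_on (\<lambda>w. restrict (Phi w) (An (Suc m))) (Rg m)"
proof (rule inj_onI, rule ccontr)
  fix w1 w2 assume w1: "w1 \<in> Rg m" and w2: "w2 \<in> Rg m"
    and eq: "restrict (Phi w1) (An (Suc m)) = restrict (Phi w2) (An (Suc m))" and ne: "w1 \<noteq> w2"
  have l: "length w1 = m" "length w2 = m" using w1 w2 by (auto simp: Rg_def)
  then obtain i where i: "i < m" "w1 ! i \<noteq> w2 ! i" using ne nth_equalityI by metis
  have "w1 ! i \<in> set w1" "w2 ! i \<in> set w2" using i l by auto
  moreover have "set w1 \<subseteq> {0,1}" "set w2 \<subseteq> {0,1}" using w1 w2 by (auto simp: Rg_def good_def)
  ultimately have "w1 ! i \<in> {0,1}" "w2 ! i \<in> {0,1}" by blast+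
  then have "(w1 ! i = 1 \<and> w2 ! i \<noteq> 1) \<or> (w2 ! i = 1 \<and> w1 ! i \<noteq> 1)" using i(2) by auto
  then show False using sep[OF l(1) l(2) i(1)] sep[OF l(2) l(1) i(1)] eq by auto
qed

lemma spec_Nc: "2 \<le> n \<Longrightarrow> assoc_spectrum (graph_carrier (UNIV :: vert set)) gop n = Nc (n - 1)"
proof -
  assume n: "2 \<le> n"
  then obtain m where m: "n = Suc m" by (cases n) auto
  have "term_op (graph_carrier UNIV) gop n ` B n = (\<lambda>w. restrict (Phi w) (An n)) ` (lw ` B n)"
    using term_op_Phi[OF n] by (auto simp: image_image)
  also have "\<dots> = (\<lambda>w. restrict (Phi w) (An (Suc m))) ` Rg m"
    using lw_image[of n] m by simp
  finally have "card (term_op (graph_carrier UNIV) gop n ` B n) = card (Rg m)"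
    using card_image[OF inj_Phi[of m]] by simp
  then show ?thesis using m by (simp add: assoc_spectrum_def Nc_def)
qed



lemma alpha_ex: "\<exists>a::real. 1.75 \<le> a \<and> a \<le> 1.76 \<and> a^4 - a^3 - a^2 - 1 = 0"
proof (rule IVT')
  show "(1.75::real)^4 - 1.75^3 - 1.75^2 - 1 \<le> 0" by (simp add: eval_nat_numeral)
  show "0 \<le> (1.76::real)^4 - 1.76^3 - 1.76^2 - 1" by (simp add: eval_nat_numeral)
  show "(1.75::real) \<le> 1.76" by simp
  show "continuous_on {1.75..1.76::real} (\<lambda>a. a^4 - a^3 - a^2 - 1)"
    by (intro continuous_intros)
qed

lemma alpha_uniq:
  fixes a b :: real
  assumes a: "7/4 \<le> a" "a^4 - a^3 - a^2 - 1 = 0" and b: "0 < b" "b^4 - b^3 - b^2 - 1 = 0"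
  shows "b = a"
proof (rule ccontr)
  assume ne: "b \<noteq> a"
  have f: "\<And>x::real. x^4 - x^3 - x^2 - 1 = (x + 1) * (x^3 - 2*x^2 + x - 1)" by algebra
  have qa: "a^3 - 2*a^2 + a - 1 = 0" using a f[of a] by simp
  have qb: "b^3 - 2*b^2 + b - 1 = 0" using b f[of b] by simp
  have "(a^3 - 2*a^2 + a - 1) - (b^3 - 2*b^2 + b - 1) = (a - b) * ((a-1)^2 + (b-1)^2 + a*b - 1)"
    by algebra
  then have F: "(a-1)^2 + (b-1)^2 + a*b - 1 = 0" using qa qb ne by simp
  have h1: "(a-1)^2 \<ge> (3/4)^2" using a by (intro power_mono) auto
  have h1': "(a-1)^2 \<ge> 9/16" using h1 by (simp add: power2_eq_square)
  have h2: "a*b \<ge> 7/4*b" using a b by (intro mult_right_mono) auto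
  have h3: "(b-1)^2 = (b - 1/8)^2 - 7/4*b + 63/64" by algebra
  have h4: "(b - 1/8)^2 \<ge> 0" by simp
  show False using F h1' h2 h3 h4 by linarith
qed

lemma Nc_bounds:
  fixes a :: real
  assumes a1: "1 \<le> a" and a4: "a^4 = a^3 + a^2 + 1"
  shows "a^m / a^3 \<le> real (Nc m) \<and> real (Nc m) \<le> 4 * a^m"
proof (induction m rule: less_induct)
  case (less m)
  show ?case
  proof (cases "m < 4")
    case True
    have "1 \<le> real (Nc m)" "real (Nc m) \<le> 4"
      using True Nc_small by (auto simp: less_Suc_eq numeral_eq_Suc)
    then have n1: "1 \<le> real (Nc m)" and n4: "real (Nc m) \<le> 4" by auto
    have am: "a^m \<le> a^3" using True a1 by (intro power_increasing) auto
    have a1m: "1 \<le> a^m" using a1 by simp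
    have a3: "0 < a^3" using a1 by simp
    have "1 * a^3 \<le> real (Nc m) * a^3" using n1 a3 by (intro mult_right_mono) auto
    then have "a^m \<le> real (Nc m) * a^3" using am by simp
    then have l: "a^m / a^3 \<le> real (Nc m)" using a3 by (simp add: divide_le_eq)
    have "4 * 1 \<le> 4 * a^m" using a1m by simp
    then show ?thesis using l n4 by simp
  next
    case False
    then obtain k where k: "m = k + 4" using le_Suc_ex[of 4 m] by auto
    have r: "real (Nc m) = real (Nc (k+3)) + real (Nc (k+2)) + real (Nc k)"
      using Nc_rec[of k] k by simp
    have p: "a^m = a^(k+3) + a^(k+2) + a^k"
    proof -
      have "a^m = a^k * a^4" using k by (simp add: power_add)
      also have "\<dots> = a^k * (a^3 + a^2 + 1)" using a4 by simp
      also have "\<dots> = a^k * a^3 + a^k * a^2 + a^k" by (simp add: distrib_left)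
      also have "\<dots> = a^(k+3) + a^(k+2) + a^k" by (simp only: power_add)
      finally show ?thesis .
    qed
    have i1: "a^(k+3) / a^3 \<le> real (Nc (k+3)) \<and> real (Nc (k+3)) \<le> 4 * a^(k+3)" by (rule less.IH) (use k in simp)
    have i2: "a^(k+2) / a^3 \<le> real (Nc (k+2)) \<and> real (Nc (k+2)) \<le> 4 * a^(k+2)" by (rule less.IH) (use k in simp)
    have i3: "a^k / a^3 \<le> real (Nc k) \<and> real (Nc k) \<le> 4 * a^k" by (rule less.IH) (use k in simp)
    have "a^m / a^3 = a^(k+3) / a^3 + a^(k+2) / a^3 + a^k / a^3" using p by (simp add: add_divide_distrib)
    then show ?thesis using r p i1 i2 i3 by linarith
  qed
qed



theorem proposition8p3:
  shows "(\<forall>n\<ge>3. assoc_spectrum (graph_carrier (UNIV :: vert set)) (graph_op G_edges) n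
                  = card (R (n - 1)))
    \<and> (\<exists>\<alpha>::real. \<alpha> > 0 \<and> \<alpha>^4 - \<alpha>^3 - \<alpha>^2 - 1 = 0
            \<and> (\<forall>\<beta>::real. \<beta> > 0 \<and> \<beta>^4 - \<beta>^3 - \<beta>^2 - 1 = 0 \<longrightarrow> \<beta> = \<alpha>)
            \<and> 1.75 < \<alpha> \<and> \<alpha> < 1.76
            \<and> (\<lambda>n. real (assoc_spectrum (graph_carrier (UNIV :: vert set)) (graph_op G_edges) n))
                 \<in> \<Theta>(\<lambda>n. \<alpha> ^ n))"
proof -
  have P1: "\<forall>n\<ge>3. assoc_spectrum (graph_carrier (UNIV :: vert set)) (graph_op G_edges) n
                  = card (R (n - 1))"
    using spec_Nc Rg_R by (auto simp: Nc_def)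
  obtain a :: real where a: "1.75 \<le> a" "a \<le> 1.76" "a^4 - a^3 - a^2 - 1 = 0"
    using alpha_ex by blast
  have n1: "a \<noteq> 1.75"
  proof
    assume h: "a = 1.75"
    have "(1.75::real)^4 - 1.75^3 - 1.75^2 - 1 \<noteq> 0" by (simp add: eval_nat_numeral)
    then show False using a(3) h by simp
  qed
  have n2: "a \<noteq> 1.76"
  proof
    assume h: "a = 1.76"
    have "(1.76::real)^4 - 1.76^3 - 1.76^2 - 1 \<noteq> 0" by (simp add: eval_nat_numeral)
    then show False using a(3) h by simp
  qed
  have a74: "7/4 \<le> a" using a(1) by simp
  have apos: "0 < a" using a74 by simp
  have uniq: "\<forall>b::real. b > 0 \<and> b^4 - b^3 - b^2 - 1 = 0 \<longrightarrow> b = a"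
    using alpha_uniq[OF a74 a(3)] by blast
  have a1: "1 \<le> a" using a74 by simp
  have a4: "a^4 = a^3 + a^2 + 1" using a(3) by simp
  define s where "s = (\<lambda>n. real (assoc_spectrum (graph_carrier (UNIV :: vert set)) (graph_op G_edges) n))"
  have ev: "eventually (\<lambda>n. 1 / a^4 * norm (a^n) \<le> norm (s n) \<and> norm (s n) \<le> 4 * norm (a^n)) at_top"
    unfolding eventually_at_top_linorder
  proof (intro exI allI impI)
    fix n :: nat assume n: "3 \<le> n"
    then obtain m where m: "n = Suc m" by (cases n) auto
    have sn: "s n = real (Nc m)" using spec_Nc[of n] n m by (simp add: s_def)
    have b: "a^m / a^3 \<le> real (Nc m) \<and> real (Nc m) \<le> 4 * a^m" using Nc_bounds[OF a1 a4] .
    have an: "a^n = a * a^m" using m by simp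
    have "1 / a^4 * a^n = a^m / a^3" using an apos by (simp add: field_simps eval_nat_numeral)
    moreover have "4 * a^m \<le> 4 * a^n" using an a1 by (simp add: power_increasing m)
    ultimately have "1 / a^4 * a^n \<le> s n \<and> s n \<le> 4 * a^n"
      using b sn by linarith
    moreover have nn: "norm (a^n) = a^n" using apos by simp
    moreover have ns: "norm (s n) = s n" using sn by simp
    ultimately show "1 / a^4 * norm (a^n) \<le> norm (s n) \<and> norm (s n) \<le> 4 * norm (a^n)"
      by simp
  qed
  have "s \<in> \<Theta>(\<lambda>n. a ^ n)"
    by (rule bigthetaI'[OF _ _ ev]) (use apos in simp_all)
  then show ?thesis using P1 uniq apos a(3) n1 n2 a(1) a(2) unfolding s_def
    by (intro conjI exI[of _ a]) auto
qed


end
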